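(* Let $S$ be a semigroup of skew type with generating set $X=\{x_1,\ldots,x_n\}$, and assume $S$ satisfies the cyclic condition (C). Then $S$ satisfies the full cyclic condition (FC): for any $x,y\in X$ there exist sequences $x=z_1,z_2,\ldots,z_k$ and $y=y_1,y_2,\ldots,y_p$ of elements of $X$ such that, in $S$, $$y_j z_i = z_{i+1}\, y_{j+1}\quad\text{for all } 1\le i\le k,\ 1\le j\le p,$$ where indices of the $z$'s are read modulo $k$ (so $z_{k+1}=z_1$) and indices of the $y$'s modulo $p$ (so $y_{p+1}=y_1$).
   Context: A semigroup of skew type is a monoid $S$ with a monoid presentation $S=\langle x_1,\ldots,x_n \mid x_ix_j=x_kx_l\rangle$ consisting of $\binom{n}{2}$ relations, each of the form $x_ix_j=x_kx_l$ with $i\neq j$, $k\neq l$, such that every word $x_px_q$ with $p\neq q$ appears (as one side) in exactly one of the relations. We write $X=\{x_1,\ldots,x_n\}$ and use the same symbols for the generators in $S$. $S$ satisfies the cyclic condition (C) if for every pair $x,y\in X$ there exist elements $x=z_1,z_2,\ldots,z_k$ and $y'$ in $X$ such that in $S$: $yz_1=z_2y'$, $yz_2=z_3y'$, $\ldots$, $yz_{k-1}=z_ky'$, $yz_k=xy'$. *)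

theory Defs
  imports Main
begin

(* A monoid presentation with generating set X (elements of type 'a) and a set R of
   defining relations, each relation ((a,b),(c,d)) standing for  a b = c d .
   Elements of the monoid S are words (lists over X) modulo the congruence
   generated by R. *)

inductive pres_eq :: "(('a \<times> 'a) \<times> ('a \<times> 'a)) set \<Rightarrow> 'a list \<Rightarrow> 'a list \<Rightarrow> bool"
  for R where
  refl: "pres_eq R u u"
| sym: "pres_eq R u v \<Longrightarrow> pres_eq R v u"
| trans: "pres_eq R u v \<Longrightarrow> pres_eq R v w \<Longrightarrow> pres_eq R u w"
| rel: "((a, b), (c, d)) \<in> R \<Longrightarrow> pres_eq R (u @ [a, b] @ v) (u @ [c, d] @ v)"

definition skew_type :: "'a set \<Rightarrow> (('a \<times> 'a) \<times> ('a \<times> 'a)) set \<Rightarrow> bool" where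
  "skew_type X R \<longleftrightarrow>
     finite X \<and> finite R \<and> card R = card X choose 2 \<and>
     (\<forall>((a, b), (c, d)) \<in> R. a \<in> X \<and> b \<in> X \<and> c \<in> X \<and> d \<in> X \<and> a \<noteq> b \<and> c \<noteq> d) \<and>
     (\<forall>p\<in>X. \<forall>q\<in>X. p \<noteq> q \<longrightarrow> (\<exists>!r. r \<in> R \<and> (fst r = (p, q) \<or> snd r = (p, q))))"

(* Cyclic condition (C); indices 0-based, z 0 = x, and z_{k} read as z_0 = x. *)
definition cyclic_C :: "'a set \<Rightarrow> (('a \<times> 'a) \<times> ('a \<times> 'a)) set \<Rightarrow> bool" where
  "cyclic_C X R \<longleftrightarrow>
     (\<forall>x\<in>X. \<forall>y\<in>X. \<exists>k::nat. \<exists>z::nat \<Rightarrow> 'a. \<exists>y'\<in>X.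
        k \<ge> 1 \<and> z 0 = x \<and> (\<forall>i<k. z i \<in> X) \<and>
        (\<forall>i<k. pres_eq R [y, z i] [z (Suc i mod k), y']))"

definition full_cyclic_FC :: "'a set \<Rightarrow> (('a \<times> 'a) \<times> ('a \<times> 'a)) set \<Rightarrow> bool" where
  "full_cyclic_FC X R \<longleftrightarrow>
     (\<forall>x\<in>X. \<forall>y\<in>X. \<exists>k p::nat. \<exists>z w::nat \<Rightarrow> 'a.
        k \<ge> 1 \<and> p \<ge> 1 \<and> z 0 = x \<and> w 0 = y \<and>
        (\<forall>i<k. z i \<in> X) \<and> (\<forall>j<p. w j \<in> X) \<and>
        (\<forall>i<k. \<forall>j<p. pres_eq R [w j, z i] [z (Suc i mod k), w (Suc j mod p)]))"

end

theory Submission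
  imports Defs
begin

definition adj :: "(('a \<times> 'a) \<times> ('a \<times> 'a)) set \<Rightarrow> 'a \<times> 'a \<Rightarrow> 'a \<times> 'a \<Rightarrow> bool" where
  "adj R p q \<longleftrightarrow> (p, q) \<in> R \<or> (q, p) \<in> R"

definition sig :: "(('a \<times> 'a) \<times> ('a \<times> 'a)) set \<Rightarrow> 'a \<times> 'a \<Rightarrow> 'a \<times> 'a" where
  "sig R p = (if \<exists>q. adj R p q then THE q. adj R p q else p)"

lemma adj_sym: "adj R p q \<Longrightarrow> adj R q p"
  by (auto simp: adj_def)

lemma adjX:
  assumes "skew_type X R" "adj R p q"
  shows "fst p \<in> X \<and> snd p \<in> X \<and> fst p \<noteq> snd p \<and> fst q \<in> X \<and> snd q \<in> X \<and> fst q \<noteq> snd q"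
proof -
  have H: "\<forall>((a, b), (c, d)) \<in> R. a \<in> X \<and> b \<in> X \<and> c \<in> X \<and> d \<in> X \<and> a \<noteq> b \<and> c \<noteq> d"
    using assms(1) unfolding skew_type_def by blast
  obtain a b c d where p: "p = (a, b)" and q: "q = (c, d)" by (cases p, cases q)
  show ?thesis using assms(2) H unfolding adj_def p q by auto
qed

lemma adj_uniq:
  assumes sk: "skew_type X R" and pq: "adj R p q" and pr: "adj R p r"
  shows "q = r"
proof -
  obtain a b where p: "p = (a, b)" by (cases p)
  have ab: "a \<in> X" "b \<in> X" "a \<noteq> b" using adjX[OF sk pq] p by auto
  have E: "\<forall>p\<in>X. \<forall>q\<in>X. p \<noteq> q \<longrightarrow> (\<exists>!r. r \<in> R \<and> (fst r = (p, q) \<or> snd r = (p, q)))"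
    using sk unfolding skew_type_def by (elim conjE) assumption
  obtain r0 where r0: "\<And>r. r \<in> R \<and> (fst r = (a, b) \<or> snd r = (a, b)) \<Longrightarrow> r = r0"
    using E[rule_format, OF ab] by (metis (no_types, lifting))
  have U: "\<And>r1 r2. r1 \<in> R \<Longrightarrow> (fst r1 = p \<or> snd r1 = p) \<Longrightarrow> r2 \<in> R \<Longrightarrow> (fst r2 = p \<or> snd r2 = p) \<Longrightarrow> r1 = r2"
    using r0 unfolding p by metis
  show ?thesis
    using pq pr U[of "(p,q)" "(p,r)"] U[of "(p,q)" "(r,p)"] U[of "(q,p)" "(p,r)"] U[of "(q,p)" "(r,p)"]
    unfolding adj_def by auto
qed

lemma sig_adj: "skew_type X R \<Longrightarrow> adj R p q \<Longrightarrow> sig R p = q"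
  unfolding sig_def using adj_uniq by (metis (mono_tags, lifting) the_equality)

lemma sig_noadj: "\<not> (\<exists>q. adj R p q) \<Longrightarrow> sig R p = p"
  unfolding sig_def by auto

lemma sig_inv: assumes "skew_type X R" shows "sig R (sig R p) = p"
proof (cases "\<exists>q. adj R p q")
  case True
  then obtain q where "adj R p q" by blast
  then show ?thesis using sig_adj[OF assms] adj_sym by metis
next
  case False
  then show ?thesis by (simp add: sig_noadj)
qed

lemma sig_diag: assumes "skew_type X R" shows "sig R (a, a) = (a, a)"
  using adjX[OF assms] by (intro sig_noadj) fastforce

lemma sigX: assumes "skew_type X R" "a \<in> X" "b \<in> X" shows "sig R (a, b) \<in> X \<times> X"
proof (cases "\<exists>q. adj R (a,b) q")
  case True
  then obtain q where "adj R (a,b) q" by blast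
  then show ?thesis using sig_adj[OF assms(1)] adjX[OF assms(1)] by (cases q) fastforce
next
  case False
  then show ?thesis using assms by (simp add: sig_noadj)
qed

lemma pres_len2:
  assumes sk: "skew_type X R"
  shows "pres_eq R u v \<Longrightarrow> length u = length v \<and> (length u = 2 \<longrightarrow> u = v \<or>
     (\<exists>p q. u = [fst p, snd p] \<and> v = [fst q, snd q] \<and> adj R p q))"
proof (induction rule: pres_eq.induct)
  case (refl u)
  then show ?case by simp
next
  case (sym u v)
  then show ?case using adj_sym by metis
next
  case (trans u v w)
  show ?case
  proof (cases "length u = 2")
    case True
    show ?thesis
    proof (cases "u = v \<or> v = w")
      case True
      then show ?thesis using trans.IH by auto
    next
      case False
      then obtain p q p' q' where A: "u = [fst p, snd p]" "v = [fst q, snd q]" "adj R p q"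
        and B: "v = [fst p', snd p']" "w = [fst q', snd q']" "adj R p' q'"
        using trans.IH \<open>length u = 2\<close> by (metis)
      have "q = p'" using A(2) B(1) by (simp add: prod_eq_iff)
      then have "p = q'" using adj_uniq[OF sk adj_sym[OF A(3)]] B(3) by simp
      then show ?thesis using A B trans.IH by simp
    qed
  qed (use trans.IH in simp)
next
  case (rel a b c d u v)
  then show ?case by (auto simp: adj_def)
qed

lemma pres_sig:
  assumes sk: "skew_type X R" and "pres_eq R [a, b] [c, d]"
  shows "(c, d) = (a, b) \<or> (c, d) = sig R (a, b)"
proof -
  have "[a, b] = [c, d] \<or> (\<exists>p q. [a, b] = [fst p, snd p] \<and> [c, d] = [fst q, snd q] \<and> adj R p q)"
    using pres_len2[OF sk assms(2)] by simp
  then show ?thesis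
  proof
    assume "\<exists>p q. [a, b] = [fst p, snd p] \<and> [c, d] = [fst q, snd q] \<and> adj R p q"
    then obtain p q where "[a, b] = [fst p, snd p]" "[c, d] = [fst q, snd q]" "adj R p q" by blast
    then show ?thesis using sig_adj[OF sk] by (metis list.inject prod.collapse)
  qed simp
qed

lemma sig_pres:
  assumes sk: "skew_type X R" and "sig R (a, b) = (c, d)" shows "pres_eq R [a, b] [c, d]"
proof (cases "\<exists>q. adj R (a,b) q")
  case True
  then obtain q where "adj R (a,b) q" by blast
  then have "adj R (a,b) (c,d)" using sig_adj[OF sk] assms(2) by metis
  then have "((a,b),(c,d)) \<in> R \<or> ((c,d),(a,b)) \<in> R" by (simp add: adj_def)
  then show ?thesis
    using pres_eq.rel[of a b c d R "[]" "[]"] pres_eq.rel[of c d a b R "[]" "[]"] pres_eq.sym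
    by auto
next
  case False
  then have "(c, d) = (a, b)" using assms(2) sig_noadj[OF False] by simp
  then show ?thesis using pres_eq.refl by simp
qed

lemma goodC:
  assumes sk: "skew_type X R" and C: "cyclic_C X R" and xX: "x \<in> X" and yX: "y \<in> X"
  shows "\<exists>k z y'. k \<ge> 1 \<and> z 0 = x \<and> (\<forall>i<k. z i \<in> X) \<and> y' \<in> X \<and>
           (\<forall>i<k. sig R (y, z i) = (z (Suc i mod k), y'))"
proof -
  obtain k z y' where k: "k \<ge> 1" and z0: "z 0 = x" and zX: "\<forall>i<k. z i \<in> X" and y'X: "y' \<in> X"
    and rel: "\<forall>i<k. pres_eq R [y, z i] [z (Suc i mod k), y']"
    using C xX yX unfolding cyclic_C_def by blast
  have "sig R (y, z i) = (z (Suc i mod k), y')" if i: "i < k" for i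
  proof (rule ccontr)
    assume ne: "sig R (y, z i) \<noteq> (z (Suc i mod k), y')"
    then have eq: "(z (Suc i mod k), y') = (y, z i)" using pres_sig[OF sk rel[rule_format, OF i]] by metis
    have "y \<noteq> z i" using ne eq sig_diag[OF sk] by auto
    define i' where "i' = Suc i mod k"
    have i': "i' < k" using k by (simp add: i'_def)
    have "pres_eq R [y, y] [z (Suc i' mod k), y']" using rel i' eq i'_def by auto
    then have "y' = y" using pres_sig[OF sk] sig_diag[OF sk] by (metis prod.inject)
    then show False using eq \<open>y \<noteq> z i\<close> by simp
  qed
  then show ?thesis using k z0 zX y'X by blast
qed

lemma lemL:
  assumes sk: "skew_type X R" and C: "cyclic_C X R" and aX: "a \<in> X" and cX: "c \<in> X"
    and s: "sig R (a, c) = (b, v)"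
  shows "\<exists>t. sig R (c, v) = (a, t)"
proof -
  obtain k z y' where k: "k \<ge> 1" and z0: "z 0 = c" and rel: "\<forall>i<k. sig R (a, z i) = (z (Suc i mod k), y')"
    using goodC[OF sk C cX aX] by blast
  have "y' = v" using rel[rule_format, of 0] k z0 s by auto
  moreover have "sig R (a, z (k - 1)) = (z (Suc (k - 1) mod k), y')" using rel k by simp
  ultimately have "sig R (a, z (k - 1)) = (c, v)" using k z0 by simp
  then have "sig R (c, v) = (a, z (k - 1))" using sig_inv[OF sk] by metis
  then show ?thesis by blast
qed

lemma iter:
  assumes k: "k \<ge> 1" and h: "\<forall>i<k. fst (sig R (w, z i)) = z (Suc i mod k)"
  shows "((\<lambda>u. fst (sig R (w, u))) ^^ m) (z 0) = z (m mod k)"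
proof (induction m)
  case 0
  then show ?case by simp
next
  case (Suc m)
  have "m mod k < k" using k by simp
  then show ?case using Suc h by (simp add: mod_Suc_eq)
qed

theorem proposition2p1:
  fixes X :: "'a set" and R :: "(('a \<times> 'a) \<times> ('a \<times> 'a)) set"
  assumes "skew_type X R" and "cyclic_C X R"
  shows "full_cyclic_FC X R"
  unfolding full_cyclic_FC_def
proof (intro ballI)
  fix x y assume xX: "x \<in> X" and yX: "y \<in> X"
  note sk = assms(1) and C = assms(2)
  have finX: "finite X" using sk by (simp add: skew_type_def)
  obtain k z y' where k: "k \<ge> 1" and z0: "z 0 = x" and zX: "\<forall>i<k. z i \<in> X" and y'X: "y' \<in> X"
    and rel: "\<forall>i<k. sig R (y, z i) = (z (Suc i mod k), y')"
    using goodC[OF sk C xX yX] by blast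
  define nxt where "nxt w = snd (sig R (w, x))" for w
  define G where "G w \<longleftrightarrow> w \<in> X \<and> (\<forall>i<k. sig R (w, z i) = (z (Suc i mod k), nxt w))" for w
  have "sig R (y, z 0) = (z (Suc 0 mod k), y')" using rel k by simp
  then have "nxt y = y'" using z0 by (simp add: nxt_def)
  then have Gy: "G y" unfolding G_def using yX rel by simp
  have Gnxt: "G (nxt w)" if Gw: "G w" for w
  proof -
    let ?w' = "nxt w"
    have wX: "w \<in> X" and rw: "\<forall>i<k. sig R (w, z i) = (z (Suc i mod k), ?w')" using Gw by (auto simp: G_def)
    have w'X: "?w' \<in> X" unfolding nxt_def using sigX[OF sk wX xX] by auto
    have fstw': "fst (sig R (?w', z i)) = z (Suc i mod k)" if i: "i < k" for i
    proof -
      have "sig R (z (Suc i mod k), ?w') = (w, z i)" using rw i sig_inv[OF sk] by metis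
      moreover have "z (Suc i mod k) \<in> X" using zX k by simp
      ultimately obtain t where "sig R (?w', z i) = (z (Suc i mod k), t)"
        using lemL[OF sk C _ w'X] by blast
      then show ?thesis by simp
    qed
    from goodC[OF sk C xX w'X] obtain k' z' s where
      A: "k' \<ge> 1 \<and> z' 0 = x \<and> (\<forall>i<k'. z' i \<in> X) \<and> s \<in> X \<and> (\<forall>i<k'. sig R (?w', z' i) = (z' (Suc i mod k'), s))"
      by (elim exE) (rule that)
    note A' = conjunct2[OF conjunct2[OF A]]
    have k': "k' \<ge> 1" using conjunct1[OF A] .
    have z'0: "z' 0 = x" using conjunct1[OF conjunct2[OF A]] .
    have rel': "\<forall>i<k'. sig R (?w', z' i) = (z' (Suc i mod k'), s)"
      using conjunct2[OF conjunct2[OF A']] .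
    have it1: "((\<lambda>u. fst (sig R (?w', u))) ^^ m) (z 0) = z (m mod k)" for m
    proof (rule iter[OF k, of R ?w' z m])
      show "\<forall>i<k. fst (sig R (?w', z i)) = z (Suc i mod k)" using fstw' by blast
    qed
    have it2: "((\<lambda>u. fst (sig R (?w', u))) ^^ m) (z' 0) = z' (m mod k')" for m
    proof (rule iter[OF k', of R ?w' z' m])
      show "\<forall>i<k'. fst (sig R (?w', z' i)) = z' (Suc i mod k')" using rel' by simp
    qed
    have sndw': "snd (sig R (?w', z i)) = s" if i: "i < k" for i
    proof -
      have "z i = z' (i mod k')" using it1[of i] it2[of i] z0 z'0 i by simp
      moreover have "i mod k' < k'" using k' by simp
      ultimately show ?thesis using rel' by simp
    qed
    have "nxt ?w' = s" unfolding nxt_def[of ?w'] using sndw'[of 0] k z0 by simp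
    then show ?thesis unfolding G_def using w'X fstw' sndw' by (metis prod.collapse)
  qed
  have GX: "G w \<Longrightarrow> w \<in> X" for w by (simp add: G_def)
  have inj: "a = b" if "G a" "G b" "nxt a = nxt b" for a b
  proof -
    have "sig R (a, z 0) = (z (Suc 0 mod k), nxt a)" "sig R (b, z 0) = (z (Suc 0 mod k), nxt b)"
      using that(1,2) k unfolding G_def by auto
    then have "sig R (a, x) = sig R (b, x)" using that(3) z0 by simp
    then have "sig R (sig R (a, x)) = sig R (sig R (b, x))" by simp
    then show ?thesis using sig_inv[OF sk] by simp
  qed
  have Giter: "G ((nxt ^^ j) y)" for j by (induction j) (auto simp: Gy Gnxt)
  have Gpow: "G ((nxt ^^ j) a)" if "G a" for j a using that by (induction j) (auto simp: Gnxt)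
  have injit: "\<And>a b. G a \<Longrightarrow> G b \<Longrightarrow> (nxt ^^ i) a = (nxt ^^ i) b \<Longrightarrow> a = b" for i
  proof (induction i)
    case 0 then show ?case by simp
  next
    case (Suc i)
    have "G ((nxt ^^ i) a)" "G ((nxt ^^ i) b)"
      using Gpow Suc.prems by auto
    then have "(nxt ^^ i) a = (nxt ^^ i) b" using inj Suc.prems(3) by simp
    then show ?case using Suc by blast
  qed
  define f where "f j = (nxt ^^ j) y" for j
  have "\<not> inj_on f {..card X}"
  proof
    assume "inj_on f {..card X}"
    then have "card (f ` {..card X}) = card X + 1" by (simp add: card_image)
    moreover have sub: "f ` {..card X} \<subseteq> X"
    proof
      fix u assume "u \<in> f ` {..card X}"
      then obtain j where "u = f j" by blast
      then show "u \<in> X" using Giter[of j] GX f_def by simp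
    qed
    have "card (f ` {..card X}) \<le> card X" using card_mono[OF finX sub] .
    ultimately show False by simp
  qed
  then obtain i j where ij: "i < j" "f i = f j"
    unfolding inj_on_def by (metis linorder_neqE_nat)
  define p where "p = j - i"
  have p: "p \<ge> 1" using ij p_def by simp
  have jip: "j = i + p" using ij p_def by simp
  have "f j = (nxt ^^ i) ((nxt ^^ p) y)" unfolding f_def jip funpow_add by simp
  then have "(nxt ^^ i) ((nxt ^^ p) y) = (nxt ^^ i) y" using ij f_def by simp
  then have per: "(nxt ^^ p) y = y" using injit Giter Gy by blast
  define w where "w j = (nxt ^^ j) y" for j
  have wsuc: "w (Suc j mod p) = nxt (w j)" if "j < p" for j
  proof (cases "Suc j < p")
    case True then show ?thesis by (simp add: w_def)
  next
    case False
    then have "Suc j = p" using that by simp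
    then have "Suc j mod p = 0" by simp
    then have "w (Suc j mod p) = y" by (simp add: w_def)
    moreover have "nxt (w j) = (nxt ^^ (Suc j)) y" by (simp add: w_def)
    ultimately show ?thesis using per \<open>Suc j = p\<close> by simp
  qed
  show "\<exists>k p z w. 1 \<le> k \<and> 1 \<le> p \<and> z 0 = x \<and> w 0 = y \<and> (\<forall>i<k. z i \<in> X) \<and> (\<forall>j<p. w j \<in> X) \<and>
        (\<forall>i<k. \<forall>j<p. pres_eq R [w j, z i] [z (Suc i mod k), w (Suc j mod p)])"
  proof (intro exI conjI allI impI)
    show "1 \<le> k" "1 \<le> p" "z 0 = x" "w 0 = y" using k p z0 by (auto simp: w_def)
    show "z i \<in> X" if "i < k" for i using zX that by simp
    show "w j \<in> X" if "j < p" for j using Giter GX w_def by simp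
    show "pres_eq R [w j, z i] [z (Suc i mod k), w (Suc j mod p)]" if "i < k" "j < p" for i j
    proof -
      have "sig R (w j, z i) = (z (Suc i mod k), nxt (w j))" using Giter[of j] that unfolding G_def w_def by blast
      then show ?thesis using wsuc[OF that(2)] sig_pres[OF sk] by simp
    qed
  qed
qed

end
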